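(* For every integer $g\ge1$, the number of reflective numerical semigroups of genus $g$ equals $g+1-\tau(g)$, where $\tau(g)$ is the number of positive divisors of $g$.
   Context: A numerical semigroup is a submonoid $S$ of $(\mathbb{N}_0,+)$ with finite complement; its genus is the number of elements of $\mathbb{N}_0\setminus S$. A numerical semigroup $S$ of genus $g\ge1$ is called reflective if for every $z\in\{0,1,\dots,g-1\}$ exactly one of $z$ and $z+g$ belongs to $S$. *)

theory Defs
  imports Main
begin

definition numerical_semigroup :: "nat set \<Rightarrow> bool" where
  "numerical_semigroup S \<longleftrightarrow>
     0 \<in> S \<and> (\<forall>a\<in>S. \<forall>b\<in>S. a + b \<in> S) \<and> finite (UNIV - S)"

definition genus :: "nat set \<Rightarrow> nat" where
  "genus S = card (UNIV - S)"

definition reflective :: "nat set \<Rightarrow> bool" where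
  "reflective S \<longleftrightarrow> numerical_semigroup S \<and> genus S \<ge> 1 \<and>
     (\<forall>z < genus S. (z \<in> S) \<noteq> (z + genus S \<in> S))"

end

theory Submission
  imports Defs
begin

definition Tset :: "nat \<Rightarrow> nat \<Rightarrow> nat set" where
  "Tset g d = {x. x < g \<and> d dvd x} \<union> {x. g \<le> x \<and> x < 2*g \<and> \<not> d dvd (x-g)} \<union> {x. 2*g \<le> x}"

definition Dset :: "nat \<Rightarrow> nat set" where
  "Dset g = {d. 1 \<le> d \<and> d \<le> g \<and> (d = g \<or> \<not> d dvd g)}"

lemma card_pairs: "card ((\<lambda>z. if P z then z+g else z) ` {..<(g::nat)}) = g"
proof -
  have "inj_on (\<lambda>z. if P z then z+g else z) {..<g}"
    by (auto simp: inj_on_def split: if_splits)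
  then show ?thesis using card_image card_lessThan by metis
qed

lemma compl_T: "UNIV - Tset g d = (\<lambda>z. if d dvd z then z+g else z) ` {..<g}"
proof (rule set_eqI)
  fix x
  show "x \<in> UNIV - Tset g d \<longleftrightarrow> x \<in> (\<lambda>z. if d dvd z then z+g else z) ` {..<g}"
  proof
    assume "x \<in> UNIV - Tset g d"
    then have h: "(x < g \<and> \<not> d dvd x) \<or> (g \<le> x \<and> x < 2*g \<and> d dvd (x-g))"
      by (auto simp: Tset_def)
    then show "x \<in> (\<lambda>z. if d dvd z then z+g else z) ` {..<g}"
    proof
      assume "x < g \<and> \<not> d dvd x" then show ?thesis by (intro image_eqI[of _ _ x]) auto
    next
      assume a: "g \<le> x \<and> x < 2*g \<and> d dvd (x-g)"
      then show ?thesis by (intro image_eqI[of _ _ "x-g"]) auto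
    qed
  next
    assume "x \<in> (\<lambda>z. if d dvd z then z+g else z) ` {..<g}"
    then obtain z where "z < g" "x = (if d dvd z then z+g else z)" by auto
    then show "x \<in> UNIV - Tset g d" by (auto simp: Tset_def split: if_splits)
  qed
qed

lemma T_good:
  assumes g: "1 \<le> g" and d: "d \<in> Dset g"
  shows "numerical_semigroup (Tset g d) \<and> genus (Tset g d) = g \<and> reflective (Tset g d)"
proof -
  have gen: "genus (Tset g d) = g" unfolding genus_def compl_T by (rule card_pairs)
  have fin: "finite (UNIV - Tset g d)" unfolding compl_T by simp
  have z: "0 \<in> Tset g d" using g by (simp add: Tset_def)
  have cl: "a + b \<in> Tset g d" if a: "a \<in> Tset g d" and b: "b \<in> Tset g d" for a b
  proof -
    consider "2*g \<le> a + b" | "a < g" "b < g" | "a < g" "g \<le> b" "b < 2*g" "a + b < 2*g"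
      | "b < g" "g \<le> a" "a < 2*g" "a + b < 2*g" by linarith
    then show ?thesis
    proof cases
      case 1 then show ?thesis by (simp add: Tset_def)
    next
      case 2
      then have da: "d dvd a" and db: "d dvd b" using a b by (auto simp: Tset_def)
      show ?thesis
      proof (cases "a + b < g")
        case True then show ?thesis using da db by (simp add: Tset_def)
      next
        case False
        have "\<not> d dvd (a+b-g)"
        proof
          assume h: "d dvd (a+b-g)"
          have "g = (a+b) - (a+b-g)" using False by simp
          then have "d dvd g" using h da db by (metis dvd_add dvd_diff_nat)
          then have "d = g" using d by (auto simp: Dset_def)
          then have "a = 0" "b = 0" using da db 2
            by (auto elim!: dvdE simp: mult_less_cancel1)
          then show False using False g by simp
        qed
        then show ?thesis using False 2 by (simp add: Tset_def)
      qed
    next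
      case 3
      then have da: "d dvd a" and db: "\<not> d dvd (b-g)" using a b by (auto simp: Tset_def)
      have "a+b-g = a + (b-g)" using 3 by simp
      then have "\<not> d dvd (a+b-g)" using da db by (simp add: dvd_add_right_iff)
      then show ?thesis using 3 by (simp add: Tset_def)
    next
      case 4
      then have da: "d dvd b" and db: "\<not> d dvd (a-g)" using a b by (auto simp: Tset_def)
      have "a+b-g = b + (a-g)" using 4 by simp
      then have "\<not> d dvd (a+b-g)" using da db by (simp add: dvd_add_right_iff)
      then show ?thesis using 4 by (simp add: Tset_def)
    qed
  qed
  have ns: "numerical_semigroup (Tset g d)" unfolding numerical_semigroup_def using z cl fin by blast
  have "\<forall>z < g. (z \<in> Tset g d) \<noteq> (z + g \<in> Tset g d)" by (auto simp: Tset_def)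
  then show ?thesis using ns gen g by (simp add: reflective_def)
qed

lemma T_inj: assumes "1 \<le> g" shows "inj_on (Tset g) (Dset g)"
proof (rule inj_onI)
  fix d1 d2 assume d1: "d1 \<in> Dset g" and d2: "d2 \<in> Dset g" and e: "Tset g d1 = Tset g d2"
  have key2: "x2 dvd x1" if "x1 \<in> Dset g" "x2 \<in> Dset g" "Tset g x1 = Tset g x2" "x1 < g" for x1 x2
  proof -
    have "x1 \<in> Tset g x1" using that(4) by (simp add: Tset_def)
    then have "x1 \<in> Tset g x2" using that(3) by simp
    then show ?thesis using that(4) by (simp add: Tset_def)
  qed
  have p1: "1 \<le> d1" "d1 \<le> g" "1 \<le> d2" "d2 \<le> g" using d1 d2 by (auto simp: Dset_def)
  show "d1 = d2"
  proof (cases "d1 < g")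
    case True
    then have a: "d2 dvd d1" using key2 d1 d2 e by blast
    show ?thesis
    proof (cases "d2 < g")
      case True
      then have "d1 dvd d2" using key2 d1 d2 e by metis
      then show ?thesis using a by (simp add: dvd_antisym)
    next
      case False
      then have "d2 = g" using p1 by simp
      then show ?thesis using a True p1 by (metis dvd_imp_le le_antisym not_less le_neq_implies_less One_nat_def le_trans Suc_le_eq)
    qed
  next
    case False
    then have g1: "d1 = g" using p1 by simp
    show ?thesis
    proof (cases "d2 < g")
      case True
      then have "d1 dvd d2" using key2 d1 d2 e by metis
      then show ?thesis using g1 True p1 by (metis dvd_imp_le not_less One_nat_def Suc_le_eq)
    next
      case False then show ?thesis using g1 p1 by simp
    qed
  qed
qed

lemma refl_char:
  assumes r: "reflective S" and gS: "genus S = g"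
  shows "\<exists>d\<in>Dset g. S = Tset g d"
proof -
  have ns: "numerical_semigroup S" and g: "1 \<le> g"
    and rf: "\<And>z. z < g \<Longrightarrow> (z \<in> S) \<noteq> (z + g \<in> S)"
    using r gS by (auto simp: reflective_def)
  have z0: "0 \<in> S" and add: "\<And>a b. a \<in> S \<Longrightarrow> b \<in> S \<Longrightarrow> a + b \<in> S"
    and fin: "finite (UNIV - S)" using ns by (auto simp: numerical_semigroup_def)
  define C' where "C' = (\<lambda>z. if z \<in> S then z+g else z) ` {..<g}"
  have sub: "C' \<subseteq> UNIV - S" using rf by (auto simp: C'_def)
  have "card C' = card (UNIV - S)" using gS card_pairs unfolding C'_def genus_def by metis
  then have eqC: "C' = UNIV - S" using card_subset_eq[OF fin sub] by simp
  have big: "x \<in> S" if "2*g \<le> x" for x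
  proof (rule ccontr)
    assume "x \<notin> S" then have "x \<in> C'" using eqC by auto
    then show False using that by (auto simp: C'_def split: if_splits)
  qed
  have gnot: "g \<notin> S" using rf[of 0] g z0 by simp
  have subtr: "b - a \<in> S" if "a \<in> S" "b \<in> S" "a \<le> b" "b < g" for a b
  proof (rule ccontr)
    assume "b - a \<notin> S"
    then have "b - a + g \<in> S" using rf[of "b-a"] that by auto
    then have "a + (b - a + g) \<in> S" using add that(1) by blast
    then have "b + g \<in> S" using that(3) by simp
    then show False using rf[of b] that by simp
  qed
  define d where "d = (if \<exists>x. 0 < x \<and> x < g \<and> x \<in> S then LEAST x. 0 < x \<and> x < g \<and> x \<in> S else g)"
  have low: "x \<in> S \<longleftrightarrow> d dvd x" if "x < g" for x
  proof (cases "\<exists>x. 0 < x \<and> x < g \<and> x \<in> S")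
    case True
    have dP: "0 < d \<and> d < g \<and> d \<in> S" unfolding d_def using True LeastI_ex[OF True] by simp
    have dmin: "\<And>y. 0 < y \<Longrightarrow> y < g \<Longrightarrow> y \<in> S \<Longrightarrow> d \<le> y"
      unfolding d_def using True by (simp add: Least_le)
    have A: "d dvd x" if "x \<in> S" "x < g" for x
      using that
    proof (induction x rule: less_induct)
      case (less x)
      show ?case
      proof (cases "x < d")
        case True
        then have "x = 0" using dmin less.prems by (metis not_less neq0_conv)
        then show ?thesis by simp
      next
        case False
        then have "x - d \<in> S" using subtr dP less.prems by simp
        then have "d dvd (x - d)" using less.IH[of "x-d"] less.prems dP False by simp
        then show ?thesis using False by (metis dvd_diff_nat dvd_refl le_add_diff_inverse not_less dvd_add)
      qed
    qed
    have B: "k * d \<in> S" if "k * d < g" for k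
      using that
    proof (induction k)
      case 0 then show ?case using z0 by simp
    next
      case (Suc k)
      then have "k * d \<in> S" by simp
      then show ?case using add dP by (simp add: add.commute)
    qed
    show ?thesis using A B that by (auto elim!: dvdE simp: mult.commute)
  next
    case False
    then have "d = g" unfolding d_def by (simp only: if_False)
    then show ?thesis using False that z0
      by (metis dvd_imp_le gr0I leD dvd_0_right)
  qed
  have dD: "d \<in> Dset g"
  proof -
    have "1 \<le> d \<and> d \<le> g"
    proof (cases "\<exists>x. 0 < x \<and> x < g \<and> x \<in> S")
      case True
      then show ?thesis unfolding d_def using LeastI_ex[OF True] by auto
    next
      case False then have "d = g" unfolding d_def by (simp only: if_False)
      then show ?thesis using g by simp
    qed
    moreover have "d = g \<or> \<not> d dvd g"
    proof (rule ccontr)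
      assume h: "\<not> (d = g \<or> \<not> d dvd g)"
      then have dl: "d < g" "d dvd g" using calculation by auto
      have "d \<in> S" using low[of d] dl by simp
      moreover have "g - d \<in> S"
      proof -
        have "0 < d" using \<open>1 \<le> d \<and> d \<le> g\<close> by simp
        then have "g - d < g" using dl by simp
        moreover have "d dvd (g - d)" using dl by (simp add: dvd_diff_nat)
        ultimately show ?thesis using low by blast
      qed
      ultimately have "d + (g - d) \<in> S" using add by blast
      then show False using gnot dl by simp
    qed
    ultimately show ?thesis by (simp add: Dset_def)
  qed
  have "S = Tset g d"
  proof (rule set_eqI)
    fix x
    consider "x < g" | "g \<le> x" "x < 2*g" | "2*g \<le> x" by linarith
    then show "x \<in> S \<longleftrightarrow> x \<in> Tset g d"
    proof cases
      case 1 then show ?thesis using low by (simp add: Tset_def)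
    next
      case 2
      then have "x - g < g" "x = (x - g) + g" by auto
      then have "x \<in> S \<longleftrightarrow> \<not> d dvd (x - g)" using rf[of "x-g"] low[of "x-g"] by metis
      then show ?thesis using 2 by (simp add: Tset_def)
    next
      case 3 then show ?thesis using big by (simp add: Tset_def)
    qed
  qed
  then show ?thesis using dD by blast
qed

lemma card_D: assumes "1 \<le> g" shows "int (card (Dset g)) = int g + 1 - int (card {d. d dvd g})"
proof -
  have sub: "{d. d dvd g} - {g} \<subseteq> {1..g}" using assms by (auto dest: dvd_imp_le intro: ccontr)
  have D: "Dset g = {1..g} - ({d. d dvd g} - {g})" by (auto simp: Dset_def)
  have fin: "finite {d. d dvd g}" using assms by simp
  have gin: "g \<in> {d. d dvd g}" by simp
  have c1: "card ({d. d dvd g} - {g}) = card {d. d dvd g} - 1" using fin gin by simp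
  have c2: "card ({d. d dvd g} - {g}) \<le> g" using card_mono[OF _ sub] by simp
  have "card {d. d dvd g} \<ge> 1" using fin gin by (metis card_0_eq empty_iff less_one not_less)
  then show ?thesis unfolding D using card_Diff_subset[OF _ sub] c1 c2 fin by simp
qed

theorem mainTheorem15:
  fixes g :: nat
  assumes "g \<ge> 1"
  shows "int (card {S. numerical_semigroup S \<and> genus S = g \<and> reflective S})
           = int g + 1 - int (card {d. d dvd g})"
proof -
  have "{S. numerical_semigroup S \<and> genus S = g \<and> reflective S} = Tset g ` Dset g"
  proof
    show "{S. numerical_semigroup S \<and> genus S = g \<and> reflective S} \<subseteq> Tset g ` Dset g"
      using refl_char by blast
    show "Tset g ` Dset g \<subseteq> {S. numerical_semigroup S \<and> genus S = g \<and> reflective S}"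
      using T_good[OF assms] by blast
  qed
  then have "card {S. numerical_semigroup S \<and> genus S = g \<and> reflective S} = card (Dset g)"
    using card_image[OF T_inj[OF assms]] by simp
  then show ?thesis using card_D[OF assms] by simp
qed

end
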